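(* Let $\mathbb{G}$ be a graph as described in the context and let $\lambda$ be a finite nonnegative Borel measure on $\mathbb{G}$. Then for any exponents $1\le p<q<\infty$ and all Borel probability measures $\mu,\nu$ on $\mathbb{G}$, $$\hat{\mathcal{S}}_p(\mu,\nu) \le \big[\lambda(\mathbb{G})(1+\lambda(\mathbb{G}))\big]^{\frac1p-\frac1q}\,\hat{\mathcal{S}}_q(\mu,\nu).$$
   Context: $\mathbb{G}=(V,E)$ is a connected, undirected graph with $V \subset \mathbb{R}^n$, where each edge is the line segment joining its endpoints and has positive length $w_e$; $\mathbb{G}$ is identified with the set of all nodes and all points of all edges, with the Euclidean-induced topology, and carries the shortest-path metric $d_{\mathbb{G}}$. There is a fixed root node $z_0\in V$ such that for every $x\in\mathbb{G}$ the shortest path $[z_0,x]$ is unique. For $x\in\mathbb{G}$ let $\Lambda(x) := \{y\in\mathbb{G} : x\in[z_0,y]\}$. For $1\le r\le\infty$, a continuous $f:\mathbb{G}\to\mathbb{R}$ belongs to $W^{1,r}(\mathbb{G},\lambda)$ if there is $h\in L^r(\mathbb{G},\lambda)$ with $f(x)-f(z_0) = \int_{[z_0,x]} h\,d\lambda$ for all $x$; this $h$ is unique and denoted $f'$; $W^{1,r}_0(\mathbb{G},\lambda)$ consists of those $f$ with $f(z_0)=0$. The weight is $\hat w(x) := 1+\lambda(\Lambda(x))$, and $\|g\|_{L^r_{\hat w}} := (\int \hat w|g|^r\,d\lambda)^{1/r}$ for $r<\infty$ ($\lambda$-essential sup of $|g|$ for $r=\infty$). For $1\le s\le\infty$ with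 conjugate exponent $s'$, the regularized Sobolev IPM is $$\hat{\mathcal{S}}_s(\mu,\nu) := \sup\left\{ \left|\int f\,d\mu - \int f\,d\nu\right| : f\in W^{1,s'}_0(\mathbb{G},\lambda),\ \|f'\|_{L^{s'}_{\hat w}}\le 1\right\}.$$ *)

theory Defs
  imports "HOL-Analysis.Analysis" "HOL-Probability.Essential_Supremum" "HOL-Probability.Probability_Measure"
begin

definition graph_pts :: "'a::euclidean_space set \<Rightarrow> 'a set set \<Rightarrow> 'a set" where
  "graph_pts V E = V \<union> \<Union>{closed_segment a b | a b. {a, b} \<in> E}"

definition is_walk :: "'a set set \<Rightarrow> 'a list \<Rightarrow> bool" where
  "is_walk E vs \<longleftrightarrow> vs \<noteq> [] \<and> (\<forall>i. Suc i < length vs \<longrightarrow> {vs ! i, vs ! Suc i} \<in> E)"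

definition is_graph :: "'a::euclidean_space set \<Rightarrow> 'a set set \<Rightarrow> ('a set \<Rightarrow> real) \<Rightarrow> 'a \<Rightarrow> bool" where
  "is_graph V E w z0 \<longleftrightarrow>
     finite V \<and> z0 \<in> V \<and>
     (\<forall>e\<in>E. \<exists>a b. a \<in> V \<and> b \<in> V \<and> a \<noteq> b \<and> e = {a, b}) \<and>
     (\<forall>e\<in>E. w e > 0) \<and>
     (\<forall>a b c d. {a, b} \<in> E \<longrightarrow> {c, d} \<in> E \<longrightarrow> {a, b} \<noteq> {c, d} \<longrightarrow>
        closed_segment a b \<inter> closed_segment c d \<subseteq> {a, b} \<inter> {c, d}) \<and>
     (\<forall>v\<in>V. \<exists>vs. is_walk E vs \<and> hd vs = z0 \<and> last vs = v)"

text \<open>A route from z0 to x: a walk vs from z0 followed by a portion (fraction t)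
of an edge {last vs, u}; or ending exactly at the vertex last vs (u = last vs, t = 0).\<close>

definition is_route :: "'a::euclidean_space set set \<Rightarrow> 'a \<Rightarrow> 'a \<Rightarrow> 'a list \<times> 'a \<times> real \<Rightarrow> bool" where
  "is_route E z0 x r \<longleftrightarrow> (case r of (vs, u, t) \<Rightarrow>
     is_walk E vs \<and> hd vs = z0 \<and>
     ((u = last vs \<and> t = 0) \<or> ({last vs, u} \<in> E \<and> 0 \<le> t \<and> t \<le> 1)) \<and>
     x = last vs + t *\<^sub>R (u - last vs))"

definition route_len :: "('a set \<Rightarrow> real) \<Rightarrow> 'a list \<times> 'a \<times> real \<Rightarrow> real" where
  "route_len w r = (case r of (vs, u, t) \<Rightarrow>
     (\<Sum>i<length vs - 1. w {vs ! i, vs ! Suc i}) + t * w {last vs, u})"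

definition route_trace :: "'a::euclidean_space list \<times> 'a \<times> real \<Rightarrow> 'a set" where
  "route_trace r = (case r of (vs, u, t) \<Rightarrow>
     (\<Union>i<length vs - 1. closed_segment (vs ! i) (vs ! Suc i))
     \<union> closed_segment (last vs) (last vs + t *\<^sub>R (u - last vs)))"

definition gdist :: "'a::euclidean_space set set \<Rightarrow> ('a set \<Rightarrow> real) \<Rightarrow> 'a \<Rightarrow> 'a \<Rightarrow> real" where
  "gdist E w z0 x = Inf (route_len w ` {r. is_route E z0 x r})"

definition is_shortest_path :: "'a::euclidean_space set set \<Rightarrow> ('a set \<Rightarrow> real) \<Rightarrow> 'a \<Rightarrow> 'a \<Rightarrow> 'a set \<Rightarrow> bool" where
  "is_shortest_path E w z0 x S \<longleftrightarrow>
     (\<exists>r. is_route E z0 x r \<and> route_len w r = gdist E w z0 x \<and> S = route_trace r)"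

text \<open>The shortest path [z0, x] (meaningful when it is unique).\<close>
definition spath :: "'a::euclidean_space set set \<Rightarrow> ('a set \<Rightarrow> real) \<Rightarrow> 'a \<Rightarrow> 'a \<Rightarrow> 'a set" where
  "spath E w z0 x = (THE S. is_shortest_path E w z0 x S)"

definition subtree :: "'a::euclidean_space set \<Rightarrow> 'a set set \<Rightarrow> ('a set \<Rightarrow> real) \<Rightarrow> 'a \<Rightarrow> 'a \<Rightarrow> 'a set" where
  "subtree V E w z0 x = {y \<in> graph_pts V E. x \<in> spath E w z0 y}"

definition hat_w :: "'a::euclidean_space set \<Rightarrow> 'a set set \<Rightarrow> ('a set \<Rightarrow> real) \<Rightarrow> 'a \<Rightarrow> 'a measure \<Rightarrow> 'a \<Rightarrow> real" where
  "hat_w V E w z0 lam x = 1 + measure lam (subtree V E w z0 x)"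

definition in_Lr :: "'a measure \<Rightarrow> ereal \<Rightarrow> ('a \<Rightarrow> real) \<Rightarrow> bool" where
  "in_Lr lam r h \<longleftrightarrow> h \<in> borel_measurable lam \<and>
     (if r = \<infinity> then (\<exists>C. AE x in lam. \<bar>h x\<bar> \<le> C)
      else integrable lam (\<lambda>x. \<bar>h x\<bar> powr real_of_ereal r))"

definition wnorm :: "'a::euclidean_space set \<Rightarrow> 'a set set \<Rightarrow> ('a set \<Rightarrow> real) \<Rightarrow> 'a \<Rightarrow> 'a measure \<Rightarrow> ereal \<Rightarrow> ('a \<Rightarrow> real) \<Rightarrow> ereal" where
  "wnorm V E w z0 lam r g =
     (if r = \<infinity> then esssup lam (\<lambda>x. ereal \<bar>g x\<bar>)
      else ereal ((\<integral>x. hat_w V E w z0 lam x * \<bar>g x\<bar> powr real_of_ereal r \<partial>lam)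
                  powr (1 / real_of_ereal r)))"

definition is_W1_deriv :: "'a::euclidean_space set \<Rightarrow> 'a set set \<Rightarrow> ('a set \<Rightarrow> real) \<Rightarrow> 'a \<Rightarrow> 'a measure \<Rightarrow> ereal \<Rightarrow> ('a \<Rightarrow> real) \<Rightarrow> ('a \<Rightarrow> real) \<Rightarrow> bool" where
  "is_W1_deriv V E w z0 lam r f h \<longleftrightarrow>
     continuous_on (graph_pts V E) f \<and> in_Lr lam r h \<and>
     (\<forall>x\<in>graph_pts V E. f x - f z0 = (LINT y:spath E w z0 x|lam. h y))"

definition conj_exp :: "real \<Rightarrow> ereal" where
  "conj_exp s = (if s = 1 then \<infinity> else ereal (s / (s - 1)))"

definition reg_sobolev_ipm :: "'a::euclidean_space set \<Rightarrow> 'a set set \<Rightarrow> ('a set \<Rightarrow> real) \<Rightarrow> 'a \<Rightarrow> 'a measure \<Rightarrow> real \<Rightarrow> 'a measure \<Rightarrow> 'a measure \<Rightarrow> ereal" where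
  "reg_sobolev_ipm V E w z0 lam s \<mu> \<nu> =
     Sup {ereal \<bar>(\<integral>x. f x \<partial>\<mu>) - (\<integral>x. f x \<partial>\<nu>)\<bar> | f.
            f z0 = 0 \<and>
            (\<exists>h. is_W1_deriv V E w z0 lam (conj_exp s) f h \<and>
                 wnorm V E w z0 lam (conj_exp s) h \<le> 1)}"

end

theory Submission
  imports Defs
begin

lemma young_pt:
  fixes y \<theta> M :: real
  assumes "0 \<le> y" "0 < \<theta>" "\<theta> < 1" "0 < M"
  shows "y powr \<theta> \<le> M powr (1-\<theta>) * (\<theta>*y + (1-\<theta>)/M)"
proof (cases "y = 0")
  case True then show ?thesis using assms by (simp add: space_restrict_space)
next
  case False
  then have y: "y > 0" using assms by (simp add: space_restrict_space)
  have "y powr \<theta> * (1/M) powr (1-\<theta>) \<le> \<theta>*y + (1-\<theta>)*(1/M)"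
    using Youngs_inequality_0[of \<theta> "1-\<theta>" y "1/M"] assms y by (simp add: space_restrict_space)
  then have "M powr (1-\<theta>) * (y powr \<theta> * (1/M) powr (1-\<theta>)) \<le> M powr (1-\<theta>) * (\<theta>*y + (1-\<theta>)/M)"
    by (intro mult_left_mono) auto
  moreover have "M powr (1-\<theta>) * (1/M) powr (1-\<theta>) = 1"
    using assms by (simp add: powr_divide flip: powr_mult)
  ultimately show ?thesis by (simp add: algebra_simps)
qed

lemma key_finite:
  fixes lam :: "'a measure" and W h :: "'a \<Rightarrow> real" and p' q' M :: real
  assumes fm: "finite_measure lam"
    and W: "\<And>x. 0 \<le> W x \<and> W x \<le> 1 + measure lam (space lam)"
    and q': "0 < q'" "q' < p'"
    and hm: "h \<in> borel_measurable lam"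
    and hi: "integrable lam (\<lambda>x. \<bar>h x\<bar> powr p')"
    and P: "(\<integral>x. W x * \<bar>h x\<bar> powr p' \<partial>lam) \<le> 1"
    and M: "M = measure lam (space lam) * (1 + measure lam (space lam))" "0 < M"
  shows "(\<integral>x. W x * \<bar>h x\<bar> powr q' \<partial>lam) \<le> M powr (1 - q'/p')"
proof (cases "integrable lam (\<lambda>x. W x * \<bar>h x\<bar> powr q')")
  case False
  then show ?thesis by (simp add: not_integrable_integral_eq)
next
  case True
  interpret finite_measure lam by fact
  define A where "A = measure lam (space lam)"
  define \<theta> where "\<theta> = q'/p'"
  have th: "0 < \<theta>" "\<theta> < 1" using q' by (auto simp: \<theta>_def)
  have eq: "W x * \<bar>h x\<bar> powr p' = (W x * \<bar>h x\<bar> powr q') * \<bar>h x\<bar> powr (p' - q')" for x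
    by (cases "h x = 0") (auto simp: mult.assoc simp flip: powr_add)
  have meas: "(\<lambda>x. W x * \<bar>h x\<bar> powr p') \<in> borel_measurable lam"
    unfolding eq using True hm by measurable
  have int2: "integrable lam (\<lambda>x. W x * \<bar>h x\<bar> powr p')"
  proof (rule Bochner_Integration.integrable_bound[OF _ meas])
    show "integrable lam (\<lambda>x. (1 + A) * \<bar>h x\<bar> powr p')" using hi by (simp add: space_restrict_space)
    show "AE x in lam. norm (W x * \<bar>h x\<bar> powr p') \<le> norm ((1 + A) * \<bar>h x\<bar> powr p')"
      using W by (auto simp: A_def intro!: mult_right_mono)
  qed
  have pt: "W x * \<bar>h x\<bar> powr q' \<le> M powr (1-\<theta>) * (\<theta> * (W x * \<bar>h x\<bar> powr p') + (1-\<theta>)*(1+A)/M)" for x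
  proof -
    have e: "\<bar>h x\<bar> powr q' = (\<bar>h x\<bar> powr p') powr \<theta>"
      using q' by (simp add: powr_powr \<theta>_def)
    have "\<bar>h x\<bar> powr q' \<le> M powr (1-\<theta>) * (\<theta>*\<bar>h x\<bar> powr p' + (1-\<theta>)/M)"
      unfolding e by (rule young_pt) (use th M in auto)
    then have "W x * \<bar>h x\<bar> powr q' \<le> W x * (M powr (1-\<theta>) * (\<theta>*\<bar>h x\<bar> powr p' + (1-\<theta>)/M))"
      using W by (intro mult_left_mono) auto
    also have "\<dots> = M powr (1-\<theta>) * (\<theta> * (W x * \<bar>h x\<bar> powr p') + (1-\<theta>)* W x/M)"
      by (simp add: algebra_simps)
    also have "\<dots> \<le> M powr (1-\<theta>) * (\<theta> * (W x * \<bar>h x\<bar> powr p') + (1-\<theta>)*(1+A)/M)"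
      using W th M by (intro mult_left_mono add_left_mono divide_right_mono mult_left_mono) (auto simp: A_def)
    finally show ?thesis .
  qed
  have "(\<integral>x. W x * \<bar>h x\<bar> powr q' \<partial>lam) \<le> (\<integral>x. M powr (1-\<theta>) * (\<theta> * (W x * \<bar>h x\<bar> powr p') + (1-\<theta>)*(1+A)/M) \<partial>lam)"
    by (rule integral_mono[OF True]) (use int2 pt in auto)
  also have "\<dots> = M powr (1-\<theta>) * (\<theta> * (\<integral>x. W x * \<bar>h x\<bar> powr p' \<partial>lam) + (1-\<theta>)*(1+A)/M * A)"
    using int2 by (simp add: A_def)
  also have "(1-\<theta>)*(1+A)/M * A = 1 - \<theta>"
  proof -
    have "(1+A)*A = M" by (simp add: M A_def)
    then have "(1-\<theta>)*(1+A)/M * A = (1-\<theta>)*(M/M)" by (metis mult.commute mult.assoc times_divide_eq_right times_divide_eq_left)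
    then show ?thesis using M(2) by (simp add: space_restrict_space)
  qed
  also have "M powr (1-\<theta>) * (\<theta> * (\<integral>x. W x * \<bar>h x\<bar> powr p' \<partial>lam) + (1 - \<theta>)) \<le> M powr (1-\<theta>) * (\<theta> * 1 + (1-\<theta>))"
    using P th by (intro mult_left_mono add_right_mono) auto
  finally show ?thesis by (simp add: \<theta>_def)
qed

lemma key_inf:
  fixes lam :: "'a measure" and W h :: "'a \<Rightarrow> real" and q' M :: real
  assumes fm: "finite_measure lam"
    and W: "\<And>x. 0 \<le> W x \<and> W x \<le> 1 + measure lam (space lam)"
    and q': "0 < q'"
    and hb: "AE x in lam. \<bar>h x\<bar> \<le> 1"
    and M: "M = measure lam (space lam) * (1 + measure lam (space lam))"
  shows "(\<integral>x. W x * \<bar>h x\<bar> powr q' \<partial>lam) \<le> M"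
proof (cases "integrable lam (\<lambda>x. W x * \<bar>h x\<bar> powr q')")
  case False
  then show ?thesis using M by (simp add: not_integrable_integral_eq)
next
  case True
  interpret finite_measure lam by fact
  have "(\<integral>x. W x * \<bar>h x\<bar> powr q' \<partial>lam) \<le> (\<integral>x. 1 + measure lam (space lam) \<partial>lam)"
  proof (rule integral_mono_AE[OF True])
    show "AE x in lam. W x * \<bar>h x\<bar> powr q' \<le> 1 + measure lam (space lam)"
      using hb
    proof eventually_elim
      case (elim x)
      have "\<bar>h x\<bar> powr q' \<le> 1" using elim q' by (intro powr_le1) auto
      then have "W x * \<bar>h x\<bar> powr q' \<le> W x * 1" using W by (intro mult_left_mono) auto
      then show ?case using W[of x] by (simp add: space_restrict_space)
    qed
  qed simp
  then show ?thesis using M by (simp add: mult.commute)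
qed


lemma hq_int:
  fixes lam :: "'a measure" and h :: "'a \<Rightarrow> real"
  assumes fm: "finite_measure lam" and q': "0 < q'" "q' < p'"
    and hm: "h \<in> borel_measurable lam"
    and hi: "integrable lam (\<lambda>x. \<bar>h x\<bar> powr p')"
  shows "integrable lam (\<lambda>x. \<bar>h x\<bar> powr q')"
proof (rule Bochner_Integration.integrable_bound)
  interpret finite_measure lam by fact
  show "integrable lam (\<lambda>x. 1 + \<bar>h x\<bar> powr p')" using hi by (simp add: space_restrict_space)
  show "(\<lambda>x. \<bar>h x\<bar> powr q') \<in> borel_measurable lam" using hm by measurable
  show "AE x in lam. norm (\<bar>h x\<bar> powr q') \<le> norm (1 + \<bar>h x\<bar> powr p')"
  proof (intro AE_I2)
    fix x
    have "\<bar>h x\<bar> powr q' \<le> 1 + \<bar>h x\<bar> powr p'"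
    proof (cases "\<bar>h x\<bar> \<le> 1")
      case True
      then have "\<bar>h x\<bar> powr q' \<le> 1" using q' by (intro powr_le1) auto
      then show ?thesis by (smt (verit) powr_ge_zero)
    next
      case False
      then have "\<bar>h x\<bar> powr q' \<le> \<bar>h x\<bar> powr p'" using q' by (intro powr_mono) auto
      then show ?thesis by (simp add: space_restrict_space)
    qed
    then show "norm (\<bar>h x\<bar> powr q') \<le> norm (1 + \<bar>h x\<bar> powr p')" by (simp add: space_restrict_space)
  qed
qed

lemma hq_int_inf:
  fixes lam :: "'a measure" and h :: "'a \<Rightarrow> real"
  assumes fm: "finite_measure lam" and q': "0 < q'"
    and hm: "h \<in> borel_measurable lam"
    and hb: "AE x in lam. \<bar>h x\<bar> \<le> C"
  shows "integrable lam (\<lambda>x. \<bar>h x\<bar> powr q')"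
proof (rule Bochner_Integration.integrable_bound)
  interpret finite_measure lam by fact
  show "integrable lam (\<lambda>x. \<bar>C\<bar> powr q')" by (simp add: space_restrict_space)
  show "(\<lambda>x. \<bar>h x\<bar> powr q') \<in> borel_measurable lam" using hm by measurable
  show "AE x in lam. norm (\<bar>h x\<bar> powr q') \<le> norm (\<bar>C\<bar> powr q')"
    using hb
  proof eventually_elim
    case (elim x)
    then show ?case using q' by (auto intro!: powr_mono2)
  qed
qed

theorem proposition4p4:
  fixes V :: "'a::euclidean_space set" and E :: "'a set set" and w :: "'a set \<Rightarrow> real"
    and z0 :: 'a and lam \<mu> \<nu> :: "'a measure" and p q :: real
  assumes graph: "is_graph V E w z0"
    and unique_paths: "\<forall>x\<in>graph_pts V E. \<exists>!S. is_shortest_path E w z0 x S"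
    and lam_sets: "sets lam = sets (restrict_space borel (graph_pts V E))"
    and lam_fin: "finite_measure lam"
    and mu_sets: "sets \<mu> = sets (restrict_space borel (graph_pts V E))"
    and mu_prob: "prob_space \<mu>"
    and nu_sets: "sets \<nu> = sets (restrict_space borel (graph_pts V E))"
    and nu_prob: "prob_space \<nu>"
    and p: "1 \<le> p" and pq: "p < q"
  shows "reg_sobolev_ipm V E w z0 lam p \<mu> \<nu>
         \<le> ereal ((measure lam (graph_pts V E) * (1 + measure lam (graph_pts V E))) powr (1/p - 1/q))
           * reg_sobolev_ipm V E w z0 lam q \<mu> \<nu>"
proof -
  let ?G = "graph_pts V E"
  let ?W = "hat_w V E w z0 lam"
  interpret L: finite_measure lam by fact
  have spl: "space lam = ?G" using sets_eq_imp_space_eq[OF lam_sets] by (simp add: space_restrict_space)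
  have spm: "space \<mu> = ?G" using sets_eq_imp_space_eq[OF mu_sets] by (simp add: space_restrict_space)
  have spn: "space \<nu> = ?G" using sets_eq_imp_space_eq[OF nu_sets] by (simp add: space_restrict_space)
  define A where "A = measure lam ?G"
  define M where "M = A * (1 + A)"
  have Gs: "?G \<in> sets lam" using sets.top[of lam] spl by simp
  have A0: "0 \<le> A" by (simp add: A_def)
  have W: "\<And>x. 0 \<le> ?W x \<and> ?W x \<le> 1 + measure lam (space lam)"
    unfolding hat_w_def using L.bounded_measure by (auto intro: add_nonneg_nonneg)
  have q1: "1 < q" using p pq by (simp add: space_restrict_space)
  define q' where "q' = q / (q - 1)"
  have cq: "conj_exp q = ereal q'" using q1 by (simp add: conj_exp_def q'_def)
  have q'pos: "0 < q'" using q1 by (simp add: q'_def)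
  show ?thesis
  proof (cases "A = 0")
    case True
    have "reg_sobolev_ipm V E w z0 lam p \<mu> \<nu> \<le> 0"
      unfolding reg_sobolev_ipm_def
    proof (rule Sup_least, clarify)
      fix f h
      assume f0: "f z0 = 0" and d: "is_W1_deriv V E w z0 lam (conj_exp p) f h"
      have AE0: "AE x in lam. False"
        using True by (intro AE_I[of _ _ "space lam"]) (auto simp: A_def spl L.emeasure_eq_measure Gs)
      have fz: "f x = 0" if "x \<in> ?G" for x
      proof -
        have "f x - f z0 = (LINT y:spath E w z0 x|lam. h y)" using d that by (simp add: is_W1_deriv_def)
        also have "\<dots> = 0" unfolding set_lebesgue_integral_def
          by (rule integral_eq_zero_AE) (use AE0 in auto)
        finally show ?thesis using f0 by (simp add: space_restrict_space)
      qed
      have "(\<integral>x. f x \<partial>\<mu>) = (\<integral>x. 0 \<partial>\<mu>)" by (rule Bochner_Integration.integral_cong) (auto simp: spm fz)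
      moreover have "(\<integral>x. f x \<partial>\<nu>) = (\<integral>x. 0 \<partial>\<nu>)" by (rule Bochner_Integration.integral_cong) (auto simp: spn fz)
      ultimately show "ereal \<bar>(\<integral>x. f x \<partial>\<mu>) - (\<integral>x. f x \<partial>\<nu>)\<bar> \<le> 0" by (simp add: space_restrict_space)
    qed
    moreover have "ereal 0 * reg_sobolev_ipm V E w z0 lam q \<mu> \<nu> = 0" by (simp flip: zero_ereal_def)
    moreover have "(measure lam ?G * (1 + measure lam ?G)) powr (1/p-1/q) = 0" using True by (simp add: A_def)
    ultimately show ?thesis by metis
  next
    case False
    then have Apos: "0 < A" using A0 by (simp add: space_restrict_space)
    then have Mpos: "0 < M" by (simp add: M_def)
    define C where "C = M powr (1/p - 1/q)"
    have Cpos: "0 < C" using Mpos by (simp add: C_def)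
    have MM: "M = measure lam (space lam) * (1 + measure lam (space lam))" by (simp add: M_def A_def spl)
    have main: "ereal \<bar>(\<integral>x. f x \<partial>\<mu>) - (\<integral>x. f x \<partial>\<nu>)\<bar> \<le> ereal C * reg_sobolev_ipm V E w z0 lam q \<mu> \<nu>"
      if f0: "f z0 = 0" and d: "is_W1_deriv V E w z0 lam (conj_exp p) f h"
        and n: "wnorm V E w z0 lam (conj_exp p) h \<le> 1" for f h
    proof -
      define g where "g = (\<lambda>x. f x / C)"
      define k where "k = (\<lambda>x. h x / C)"
      have hm: "h \<in> borel_measurable lam" using d by (simp add: is_W1_deriv_def in_Lr_def)
      have HQ: "integrable lam (\<lambda>x. \<bar>h x\<bar> powr q') \<and>
                (\<integral>x. ?W x * \<bar>h x\<bar> powr q' \<partial>lam) \<le> C powr q'"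
      proof (cases "p = 1")
        case True
        then have cp: "conj_exp p = \<infinity>" by (simp add: conj_exp_def)
        obtain C0 where "AE x in lam. \<bar>h x\<bar> \<le> C0" using d by (auto simp: is_W1_deriv_def in_Lr_def cp)
        then have i1: "integrable lam (\<lambda>x. \<bar>h x\<bar> powr q')"
          by (intro hq_int_inf[OF lam_fin q'pos hm])
        have "esssup lam (\<lambda>x. ereal \<bar>h x\<bar>) \<le> 1" using n by (simp add: wnorm_def cp)
        then have hb: "AE x in lam. \<bar>h x\<bar> \<le> 1"
          using esssup_AE[of "\<lambda>x. ereal \<bar>h x\<bar>" lam]
        proof (elim eventually_mono)
          fix x assume "ereal \<bar>h x\<bar> \<le> esssup lam (\<lambda>x. ereal \<bar>h x\<bar>)"
          with \<open>esssup lam (\<lambda>x. ereal \<bar>h x\<bar>) \<le> 1\<close> have "ereal \<bar>h x\<bar> \<le> ereal 1"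
            using order_trans one_ereal_def by metis
          then show "\<bar>h x\<bar> \<le> 1" by simp
        qed
        have "(\<integral>x. ?W x * \<bar>h x\<bar> powr q' \<partial>lam) \<le> M"
          by (rule key_inf[OF lam_fin W q'pos hb MM])
        moreover have "C powr q' = M"
        proof -
          have "(1/p - 1/q) * q' = 1" using True q1 by (simp add: q'_def field_simps)
          then show ?thesis using Mpos by (simp add: C_def powr_powr)
        qed
        ultimately show ?thesis using i1 by (simp add: space_restrict_space)
      next
        case False
        then have p1: "1 < p" using p by (simp add: space_restrict_space)
        define p' where "p' = p / (p - 1)"
        have cp: "conj_exp p = ereal p'" using p1 by (simp add: conj_exp_def p'_def)
        have qp: "q' < p'" using p1 pq by (simp add: q'_def p'_def field_simps)
        have p'pos: "0 < p'" using p1 by (simp add: p'_def)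
        have hi: "integrable lam (\<lambda>x. \<bar>h x\<bar> powr p')" using d by (simp add: is_W1_deriv_def in_Lr_def cp)
        have i1: "integrable lam (\<lambda>x. \<bar>h x\<bar> powr q')" by (rule hq_int[OF lam_fin q'pos qp hm hi])
        define P where "P = (\<integral>x. ?W x * \<bar>h x\<bar> powr p' \<partial>lam)"
        have P0: "0 \<le> P" unfolding P_def using W by (intro Bochner_Integration.integral_nonneg) auto
        have "P powr (1/p') \<le> 1" using n by (simp add: wnorm_def cp P_def)
        then have P1: "P \<le> 1"
          by (metis P0 ge_one_powr_ge_zero le_less not_le gr_one_powr p'pos zero_less_divide_1_iff)
        have "(\<integral>x. ?W x * \<bar>h x\<bar> powr q' \<partial>lam) \<le> M powr (1 - q'/p')"
          by (rule key_finite[OF lam_fin W q'pos qp hm hi _ MM Mpos]) (use P1 in \<open>simp add: P_def\<close>)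
        moreover have "C powr q' = M powr (1 - q'/p')"
        proof -
          have "(1/p - 1/q) * q' = 1 - q'/p'" using q1 p1 by (simp add: q'_def p'_def field_simps)
          then show ?thesis using Mpos by (simp add: C_def powr_powr)
        qed
        ultimately show ?thesis using i1 by (simp add: space_restrict_space)
      qed
      have kpow: "\<bar>k x\<bar> powr q' = \<bar>h x\<bar> powr q' / C powr q'" for x
        using Cpos by (simp add: k_def abs_divide powr_divide)
      have feas1: "is_W1_deriv V E w z0 lam (conj_exp q) g k"
        unfolding is_W1_deriv_def
      proof (intro conjI ballI)
        show "continuous_on ?G g" unfolding g_def using d
          by (intro continuous_intros) (use Cpos in \<open>auto simp: is_W1_deriv_def\<close>)
        have km: "k \<in> borel_measurable lam" using hm unfolding k_def by measurable
        show "in_Lr lam (conj_exp q) k" unfolding in_Lr_def cq real_of_ereal.simps kpow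
          using HQ km by auto
        fix x assume x: "x \<in> ?G"
        have "g x - g z0 = (f x - f z0) / C" by (simp add: g_def diff_divide_distrib)
        also have "\<dots> = (LINT y:spath E w z0 x|lam. h y) / C" using d x by (simp add: is_W1_deriv_def)
        also have "\<dots> = (LINT y:spath E w z0 x|lam. k y)"
          unfolding set_lebesgue_integral_def k_def by (simp flip: integral_divide_zero)
        finally show "g x - g z0 = (LINT y:spath E w z0 x|lam. k y)" .
      qed
      have feas2: "wnorm V E w z0 lam (conj_exp q) k \<le> 1"
      proof -
        have "(\<integral>x. ?W x * \<bar>k x\<bar> powr q' \<partial>lam) = (\<integral>x. ?W x * \<bar>h x\<bar> powr q' \<partial>lam) / C powr q'"
          unfolding kpow by (simp flip: integral_divide_zero)
        also have "\<dots> \<le> 1" using HQ Cpos by (simp add: space_restrict_space)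
        finally have le1: "(\<integral>x. ?W x * \<bar>k x\<bar> powr q' \<partial>lam) \<le> 1" .
        have ge0: "0 \<le> (\<integral>x. ?W x * \<bar>k x\<bar> powr q' \<partial>lam)" using W by (intro Bochner_Integration.integral_nonneg) auto
        have "(\<integral>x. ?W x * \<bar>k x\<bar> powr q' \<partial>lam) powr (1/q') \<le> 1"
          using le1 ge0 q'pos by (intro powr_le1) auto
        then show ?thesis by (simp add: wnorm_def cq)
      qed
      have "ereal \<bar>(\<integral>x. g x \<partial>\<mu>) - (\<integral>x. g x \<partial>\<nu>)\<bar> \<le> reg_sobolev_ipm V E w z0 lam q \<mu> \<nu>"
        unfolding reg_sobolev_ipm_def
      proof (rule Sup_upper, simp only: mem_Collect_eq, rule exI[of _ g], intro conjI)
        show "g z0 = 0" using f0 by (simp add: g_def)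
      qed (use feas1 feas2 in blast)+
      moreover have "\<bar>(\<integral>x. f x \<partial>\<mu>) - (\<integral>x. f x \<partial>\<nu>)\<bar> = C * \<bar>(\<integral>x. g x \<partial>\<mu>) - (\<integral>x. g x \<partial>\<nu>)\<bar>"
        using Cpos by (simp add: g_def flip: diff_divide_distrib add: abs_divide)
      ultimately show ?thesis using Cpos
        by (metis ereal_mult_left_mono less_imp_le times_ereal.simps(1) ereal_less_eq(5) ereal_zero_le_0_iff)
    qed
    have "reg_sobolev_ipm V E w z0 lam p \<mu> \<nu> \<le> ereal C * reg_sobolev_ipm V E w z0 lam q \<mu> \<nu>"
      unfolding reg_sobolev_ipm_def[of V E w z0 lam p]
      by (rule Sup_least) (auto intro: main)
    then show ?thesis by (simp add: C_def M_def A_def)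
  qed
qed

end
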